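(* Let $N\geq 1$ be an integer. Then for all $|t|<\pi/2$, \[ t\sec^2 t-\tan t=\sum_{j=1}^{N-1}\frac{2j\cdot 2^{2j+2}(2^{2j+2}-1)|B_{2j+2}|}{(2j+2)!}t^{2j+1}+\kappa_N(t), \] where \[ \kappa_N(t)=\frac{N\cdot 2^{2N+4}t^{2N+1}}{\pi^{2N}}\sum_{k=1}^{\infty}\frac{1}{(2k-1)^{2N}\bigl(\pi^2(2k-1)^2-4t^2\bigr)}+\frac{2^{2N+6}t^{2N+3}}{\pi^{2N}}\sum_{k=1}^{\infty}\frac{1}{(2k-1)^{2N}\bigl(\pi^2(2k-1)^2-4t^2\bigr)^2}. \]
   Context: The Bernoulli numbers $B_n$ are defined by $\frac{t}{e^t-1}=\sum_{n=0}^\infty B_n\frac{t^n}{n!}$ for $|t|<2\pi$. An empty sum is understood to be zero. *)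

theory Defs
  imports "HOL-Analysis.Analysis"
begin

text \<open>Bernoulli numbers, defined via the generating function
  t/(e^t - 1) = sum_n B_n t^n / n!  for 0 < |t| < 2 pi.
  (At t = 0 the left side is understood as its limit 1; restricting to
  t \<noteq> 0 still determines the sequence uniquely.)\<close>
definition bernoulli_num :: "nat \<Rightarrow> real" where
  "bernoulli_num = (THE B. \<forall>t::real. t \<noteq> 0 \<and> \<bar>t\<bar> < 2 * pi \<longrightarrow>
      (\<lambda>n. B n * t ^ n / fact n) sums (t / (exp t - 1)))"

definition kappa :: "nat \<Rightarrow> real \<Rightarrow> real" where
  "kappa N t =
     real N * 2 ^ (2 * N + 4) * t ^ (2 * N + 1) / pi ^ (2 * N) *
       (\<Sum>k. 1 / ((2 * real (Suc k) - 1) ^ (2 * N) *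
                 (pi\<^sup>2 * (2 * real (Suc k) - 1)\<^sup>2 - 4 * t\<^sup>2)))
   + 2 ^ (2 * N + 6) * t ^ (2 * N + 3) / pi ^ (2 * N) *
       (\<Sum>k. 1 / ((2 * real (Suc k) - 1) ^ (2 * N) *
                 (pi\<^sup>2 * (2 * real (Suc k) - 1)\<^sup>2 - 4 * t\<^sup>2)\<^sup>2))"

end

theory Submission
  imports Defs
begin


lemma logderiv_prod:
  fixes u u' :: "nat \<Rightarrow> real \<Rightarrow> real" and F :: "real \<Rightarrow> real" and S :: "real set"
  assumes S: "open S" "convex S" "x \<in> S"
    and upos: "\<And>k y. y \<in> S \<Longrightarrow> u k y > 0"
    and uder: "\<And>k y. y \<in> S \<Longrightarrow> (u k has_real_derivative u' k y) (at y)"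
    and M: "\<And>k y. y \<in> S \<Longrightarrow> \<bar>u' k y / u k y\<bar> \<le> M k" "summable M"
    and lim: "\<And>y. y \<in> S \<Longrightarrow> (\<lambda>n. \<Prod>k<n. u k y) \<longlonglongrightarrow> F y"
    and Fpos: "\<And>y. y \<in> S \<Longrightarrow> F y > 0"
    and Fder: "(F has_real_derivative F') (at x)"
  shows "(\<lambda>k. u' k x / u k x) sums (F' / F x)"
proof -
  have lnsums: "(\<lambda>k. ln (u k y)) sums ln (F y)" if y: "y \<in> S" for y
  proof -
    have "(\<lambda>n. ln (\<Prod>k<n. u k y)) \<longlonglongrightarrow> ln (F y)"
      using lim[OF y] Fpos[OF y] by (intro tendsto_ln) auto
    moreover have "ln (\<Prod>k<n. u k y) = (\<Sum>k<n. ln (u k y))" for n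
      using upos[OF y] by (subst ln_prod) (auto simp: order_less_imp_not_eq2)
    ultimately show ?thesis unfolding sums_def by simp
  qed
  have unif: "uniformly_convergent_on S (\<lambda>n y. \<Sum>i<n. u' i y / u i y)"
    unfolding uniformly_convergent_on_def
    using Weierstrass_m_test[of S "\<lambda>i y. u' i y / u i y" M] M by auto
  have der: "((\<lambda>y. ln (u k y)) has_field_derivative u' k y / u k y) (at y within S)"
    if "y \<in> S" for k y
  proof -
    have "((\<lambda>y. ln (u k y)) has_real_derivative (1 / u k y) * u' k y) (at y)"
      by (rule DERIV_chain2[OF DERIV_ln_divide[OF upos[OF that]] uder[OF that]])
    from has_field_derivative_at_within[OF this, of S] show ?thesis by simp
  qed
  from has_field_derivative_series'(2)[OF S(2) der unif S(3) sums_summable[OF lnsums[OF S(3)]]]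
  have d1: "((\<lambda>y. \<Sum>n. ln (u n y)) has_field_derivative (\<Sum>n. u' n x / u n x)) (at x)"
    using S interior_open by auto
  have d2: "((\<lambda>y. \<Sum>n. ln (u n y)) has_field_derivative (1 / F x) * F') (at x)"
  proof -
    have "((\<lambda>y. ln (F y)) has_field_derivative (1 / F x) * F') (at x)"
      by (rule DERIV_chain2[OF DERIV_ln_divide[OF Fpos[OF S(3)]] Fder])
    thus ?thesis
      by (rule has_field_derivative_transform_within_open[OF _ S(1) S(3)])
         (use lnsums sums_unique in metis)
  qed
  have "summable (\<lambda>k. u' k x / u k x)"
    by (rule summable_comparison_test'[OF M(2), of 0]) (use M(1) S(3) in auto)
  moreover have "(\<Sum>n. u' n x / u n x) = F' / F x"
    using DERIV_unique[OF d1 d2] by simp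
  ultimately show ?thesis using summable_sums by fastforce
qed



lemma summable_inv_sq: "summable (\<lambda>k. 1 / (real (Suc k))\<^sup>2)"
  using inverse_squares_sums by (simp add: sums_iff)

lemma summable_inv_odd_sq: "summable (\<lambda>k. 1 / (2 * real k + 1)\<^sup>2)"
proof (rule summable_comparison_test[OF _ summable_inv_sq])
  show "\<exists>N. \<forall>n\<ge>N. norm (1 / (2 * real n + 1)\<^sup>2) \<le> 1 / (real (Suc n))\<^sup>2"
  proof (intro exI[of _ 0] allI impI)
    fix n :: nat
    have "(real (Suc n))^2 \<le> (2*real n+1)^2" by (intro power_mono) auto
    thus "norm (1 / (2 * real n + 1)\<^sup>2) \<le> 1 / (real (Suc n))\<^sup>2"
      by (simp add: divide_left_mono)
  qed
qed

lemma prod_double: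
  fixes x :: real
  shows "(\<Prod>k=1..2*n. 1 - (2*x)^2 / of_nat k^2) =
         (\<Prod>k=1..n. 1 - x^2 / of_nat k^2) * (\<Prod>k<n. 1 - 4*x^2 / (2 * real k + 1)^2)"
proof (induction n)
  case 0 then show ?case by simp
next
  case (Suc n)
  have e: "{1..2 * Suc n} = insert (2*n+2) (insert (2*n+1) {1..2*n})" by auto
  have A: "(1 - (2*x)^2 / of_nat (2*n+2)^2) = 1 - x^2 / of_nat (Suc n)^2"
  proof -
    have "real (2*n+2) = 2 * real (Suc n)" by simp
    thus ?thesis by (simp only: power_mult_distrib) simp
  qed
  have B: "(1 - (2*x)^2 / of_nat (2*n+1)^2) = 1 - 4*x^2 / (2 * real n + 1)^2"
  proof -
    have "real (2*n+1) = 2 * real n + 1" by simp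
    thus ?thesis by (simp only: power_mult_distrib) simp
  qed
  have "(\<Prod>k=1..2*Suc n. 1 - (2*x)^2 / of_nat k^2) =
     (1 - (2*x)^2 / of_nat (2*n+2)^2) * (1 - (2*x)^2 / of_nat (2*n+1)^2) *
     (\<Prod>k=1..2*n. 1 - (2*x)^2 / of_nat k^2)"
    by (simp add: e)
  also have "\<dots> = (1 - x^2 / of_nat (Suc n)^2) * (1 - 4*x^2 / (2 * real n + 1)^2) *
     ((\<Prod>k=1..n. 1 - x^2 / of_nat k^2) * (\<Prod>k<n. 1 - 4*x^2 / (2 * real k + 1)^2))"
    using Suc.IH A B by (simp only:)
  also have "\<dots> = (\<Prod>k=1..Suc n. 1 - x^2 / of_nat k^2) * (\<Prod>k<Suc n. 1 - 4*x^2 / (2 * real k + 1)^2)"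
    using [[simp_depth_limit=100]] by (simp only: prod.cl_ivl_Suc prod.lessThan_Suc Suc_less_eq One_nat_def not_less0 if_False)
       (simp only: mult_ac)
  finally show ?case .
qed

lemma cos_product:
  fixes x :: real
  assumes "\<bar>x\<bar> < 1/2"
  shows "(\<lambda>n. \<Prod>k<n. 1 - 4*x^2 / (2 * real k + 1)^2) \<longlonglongrightarrow> cos (pi * x)"
proof (cases "x = 0")
  case True then show ?thesis by simp
next
  case False
  define P where "P y n = (\<Prod>k=1..n. 1 - y^2 / of_nat k^2)" for y :: real and n
  have fpos: "1 - x^2 / of_nat k^2 > 0" if "k \<ge> 1" for k
  proof -
    have "x^2 < 1" using assms by (simp add: abs_square_less_1)
    also have "1 \<le> (of_nat k :: real)^2" using that by (simp add: one_le_power)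
    finally show ?thesis using that by (simp add: field_simps)
  qed
  have Ppos: "P x n > 0" for n unfolding P_def by (intro prod_pos) (use fpos in auto)
  have s1: "sin (pi * x) \<noteq> 0"
  proof
    assume "sin (pi * x) = 0"
    then obtain i :: int where "pi * x = of_int i * pi" using sin_zero_iff_int2 by blast
    hence "x = of_int i" by simp
    with assms False show False by (cases "i = 0") (auto, linarith?)
  qed
  have L1: "(\<lambda>n. P (2*x) (2*n)) \<longlonglongrightarrow> sin (pi * (2*x)) / (pi * (2*x))"
  proof -
    have "P (2*x) \<longlonglongrightarrow> sin (pi * (2*x)) / (pi * (2*x))"
      unfolding P_def using False by (intro sin_product_formula_real') simp
    moreover have "filterlim (\<lambda>n::nat. 2*n) sequentially sequentially"
      by (intro filterlim_subseq) (auto simp: strict_mono_def)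
    ultimately show ?thesis by (rule filterlim_compose[of "P (2*x)", unfolded o_def])
  qed
  have L2: "P x \<longlonglongrightarrow> sin (pi * x) / (pi * x)"
    unfolding P_def using False by (intro sin_product_formula_real')
  have "(\<lambda>n. P (2*x) (2*n) / P x n) \<longlonglongrightarrow> (sin (pi * (2*x)) / (pi * (2*x))) / (sin (pi * x) / (pi * x))"
    using s1 False by (intro tendsto_divide L1 L2) auto
  also have "(sin (pi * (2*x)) / (pi * (2*x))) / (sin (pi * x) / (pi * x)) = cos (pi * x)"
  proof -
    have "sin (pi*(2*x)) = 2 * sin (pi*x) * cos (pi*x)" using sin_double[of "pi*x"] by (simp add: mult_ac)
    thus ?thesis using s1 False by (simp add: field_simps)
  qed
  also have "(\<lambda>n. P (2*x) (2*n) / P x n) = (\<lambda>n. \<Prod>k<n. 1 - 4*x^2 / (2 * real k + 1)^2)"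
  proof (rule ext)
    fix n
    have "P (2*x) (2*n) = P x n * (\<Prod>k<n. 1 - 4*x^2 / (2 * real k + 1)^2)"
      unfolding P_def by (rule prod_double)
    thus "P (2*x) (2*n) / P x n = (\<Prod>k<n. 1 - 4*x^2 / (2 * real k + 1)^2)"
      using Ppos[of n] by simp
  qed
  finally show ?thesis .
qed



lemma odd_sq_ge: "(2 * real k + 1)^2 \<ge> 1"
  by (simp add: one_le_power)

lemma tan_pfd_pi:
  fixes x :: real
  assumes x: "\<bar>x\<bar> < 1/2"
  shows "(\<lambda>k. 8*x / ((2*real k+1)^2 - 4*x^2)) sums (pi * tan (pi*x))"
proof -
  define R where "R = (\<bar>x\<bar> + 1/2) / 2"
  have R: "\<bar>x\<bar> < R" "R < 1/2" "0 < R" using x by (auto simp: R_def)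
  define S where "S = {-R<..<R}"
  define d where "d k = (2*real k+1)^2" for k
  have d1: "d k \<ge> 1" for k unfolding d_def by (rule odd_sq_ge)
  define u where "u k y = 1 - 4*y^2 / d k" for k y
  define u' where "u' k y = - 8*y / d k" for k y
  define M where "M k = 8*R/(1 - 4*R^2) * (1 / (2*real k+1)^2)" for k
  have yS: "\<bar>y\<bar> < R" if "y \<in> S" for y using that by (auto simp: S_def)
  have y2: "4*y^2 < 1" if "y \<in> S" for y
  proof -
    have "\<bar>2*y\<bar> < 1" using yS[OF that] R by simp
    hence "(2*y)^2 < 1" by (simp only: abs_square_less_1)
    thus ?thesis by (simp add: power_mult_distrib)
  qed
  have key: "d k - 4*y^2 \<ge> (1 - 4*R^2) * d k" if "y \<in> S" for k y
  proof -
    have "y^2 \<le> R^2" using yS[OF that] R by (subst abs_le_square_iff[symmetric]) auto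
    moreover have "R^2 \<le> R^2 * d k" using d1[of k] by (simp add: mult_le_cancel_left1)
    ultimately have "4*y^2 \<le> 4*R^2 * d k" by linarith
    thus ?thesis by (simp add: algebra_simps)
  qed
  have uq: "u' k y / u k y = - 8*y / (d k - 4*y^2)" for k y
  proof -
    have dn: "d k \<noteq> 0" using d1[of k] by linarith
    have "u k y = (d k - 4*y^2)/d k" using dn by (simp add: u_def field_simps)
    thus ?thesis using dn by (simp add: u'_def)
  qed
  show ?thesis
  proof -
    have "(\<lambda>k. u' k x / u k x) sums ((- sin (pi*x) * pi) / cos (pi*x))"
    proof (rule logderiv_prod[where S = S and M = M and F = "\<lambda>y. cos (pi*y)" and u = u and u' = u' and x = x and F' = "- sin (pi*x) * pi"])
      show "open S" "convex S" "x \<in> S" using R by (auto simp: S_def)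
      show "u k y > 0" if "y \<in> S" for k y
      proof -
        have "4*y^2 < 1" by (rule y2[OF that])
        also have "1 \<le> d k" by (rule d1)
        finally show ?thesis using d1[of k] by (simp add: u_def field_simps)
      qed
      show "(u k has_real_derivative u' k y) (at y)" for k y
        using d1[of k] unfolding u_def u'_def by (auto intro!: derivative_eq_intros simp: field_simps)
      show "\<bar>u' k y / u k y\<bar> \<le> M k" if "y \<in> S" for k y
      proof -
        have "\<bar>2*R\<bar> < 1" using R by simp
        hence "(2*R)^2 < 1" by (simp only: abs_square_less_1)
        hence pos: "0 < 1 - 4*R^2" by (simp add: power_mult_distrib)
        have "0 < (1 - 4*R^2) * d k" using pos d1[of k] by simp
        hence dpos: "0 < d k - 4*y^2" using key[OF that, of k] by linarith
        have "\<bar>u' k y / u k y\<bar> = 8*\<bar>y\<bar> / (d k - 4*y^2)"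
          using dpos by (simp add: uq abs_divide abs_mult)
        also have "\<dots> \<le> 8*R / ((1 - 4*R^2) * d k)"
          using key[OF that, of k] pos d1[of k] yS[OF that]
          by (intro frac_le) auto
        also have "\<dots> = M k" by (simp add: M_def d_def)
        finally show ?thesis .
      qed
      show "summable M" unfolding M_def by (intro summable_mult summable_inv_odd_sq)
      show "(\<lambda>n. \<Prod>k<n. u k y) \<longlonglongrightarrow> cos (pi * y)" if "y \<in> S" for y
        unfolding u_def d_def using yS[OF that] R by (intro cos_product) auto
      show "cos (pi * y) > 0" if "y \<in> S" for y
      proof -
        have "\<bar>pi * y\<bar> < pi / 2" using yS[OF that] R by (simp add: abs_mult)
        hence "pi*y < pi/2" "-(pi*y) < pi/2" by (auto simp only: abs_less_iff)
        thus ?thesis by (intro cos_gt_zero_pi) linarith+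
      qed
      show "((\<lambda>y. cos (pi * y)) has_real_derivative (- sin (pi*x) * pi)) (at x)"
        by (auto intro!: derivative_eq_intros)
    qed
    hence "(\<lambda>k. - (u' k x / u k x)) sums (- ((- sin (pi*x) * pi) / cos (pi*x)))"
      by (rule sums_minus)
    moreover have "- ((- sin (pi*x) * pi) / cos (pi*x)) = pi * tan (pi*x)"
      by (simp add: tan_def)
    moreover have "- (u' k x / u k x) = 8*x / ((2*real k+1)^2 - 4*x^2)" for k
      by (simp add: uq d_def)
    ultimately show ?thesis by simp
  qed
qed



lemma odd_den_pos:
  fixes t :: real and R :: real
  assumes "\<bar>t\<bar> \<le> R" "R < pi/2"
  shows "(pi^2 - 4*R^2) * (2*real k+1)^2 \<le> pi^2*(2*real k+1)^2 - 4*t^2"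
    and "0 < pi^2 - 4*R^2"
proof -
  have R0: "0 \<le> R" using assms by linarith
  have "\<bar>2*R\<bar> < pi" using assms R0 by simp
  hence "(2*R)^2 < pi^2" using R0 by (intro power_strict_mono) auto
  thus pos: "0 < pi^2 - 4*R^2" by (simp add: power_mult_distrib)
  have "t^2 \<le> R^2" using assms by (subst abs_le_square_iff[symmetric]) auto
  moreover have "R^2 \<le> R^2 * (2*real k+1)^2" using odd_sq_ge[of k] by (simp add: mult_le_cancel_left1)
  ultimately show "(pi^2 - 4*R^2) * (2*real k+1)^2 \<le> pi^2*(2*real k+1)^2 - 4*t^2"
    by (simp add: algebra_simps)
qed

lemma tan_pfd:
  fixes t :: real
  assumes t: "\<bar>t\<bar> < pi/2"
  shows "(\<lambda>k. 8*t / (pi^2*(2*real k+1)^2 - 4*t^2)) sums tan t"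
proof -
  have x: "\<bar>t/pi\<bar> < 1/2" using t by (simp add: abs_divide field_simps)
  from sums_mult[OF tan_pfd_pi[OF x], of "1/pi"]
  have S1: "(\<lambda>k. 1/pi * (8*(t/pi) / ((2*real k+1)^2 - 4*(t/pi)^2))) sums tan t" by simp
  have eq: "1/pi * (8*(t/pi) / ((2*real k+1)^2 - 4*(t/pi)^2)) = 8*t / (pi^2*(2*real k+1)^2 - 4*t^2)" for k
  proof -
    have p: "0 < pi^2*(2*real k+1)^2 - 4*t^2"
    proof -
      have "0 < (pi^2 - 4*\<bar>t\<bar>^2) * (2*real k+1)^2"
        using odd_den_pos(2)[of t "\<bar>t\<bar>"] t odd_sq_ge[of k] by simp
      thus ?thesis using odd_den_pos(1)[of t "\<bar>t\<bar>" k] t by linarith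
    qed
    have "(2*real k+1)^2 - 4*(t/pi)^2 = (pi^2*(2*real k+1)^2 - 4*t^2) / pi^2"
      by (simp add: field_simps power_divide)
    thus ?thesis using p by (simp add: field_simps power2_eq_square)
  qed
  have "(\<lambda>k. 1/pi * (8*(t/pi) / ((2*real k+1)^2 - 4*(t/pi)^2))) =
        (\<lambda>k. 8*t / (pi^2*(2*real k+1)^2 - 4*t^2))" by (intro ext eq)
  with S1 show ?thesis by simp
qed



lemma tan_deriv_pfd:
  fixes t :: real
  assumes t: "\<bar>t\<bar> < pi/2"
  shows "(\<lambda>k. 64*t^3 / (pi^2*(2*real k+1)^2 - 4*t^2)^2) sums (t / (cos t)^2 - tan t)"
proof -
  define R where "R = (\<bar>t\<bar> + pi/2) / 2"
  have R: "\<bar>t\<bar> < R" "R < pi/2" "0 < R" using t pi_gt_zero by (auto simp: R_def)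
  define S where "S = {-R<..<R}"
  define a where "a k = pi^2*(2*real k+1)^2" for k
  define dl where "dl = pi^2 - 4*R^2"
  have dl: "0 < dl" using odd_den_pos(2)[of 0 R] R by (simp add: dl_def)
  have sS: "\<bar>z\<bar> < R" if "z \<in> S" for z using that by (auto simp: S_def)
  have lb: "dl * (2*real k+1)^2 \<le> a k - 4*z^2" if "z \<in> S" for z k
    using odd_den_pos(1)[of z R k] sS[OF that] R by (simp add: dl_def a_def)
  have apos: "0 < a k - 4*z^2" if "z \<in> S" for z k
  proof -
    have "0 < dl * (2*real k+1)^2" using dl odd_sq_ge[of k] by simp
    thus ?thesis using lb[OF that, of k] by linarith
  qed
  define h where "h k z = 8*z / (a k - 4*z^2)" for k z
  define h' where "h' k z = 8*(a k + 4*z^2) / (a k - 4*z^2)^2" for k z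
  define M where "M k = 16*pi^2/dl^2 * (1 / (2*real k+1)^2)" for k
  have tS: "t \<in> S" using R by (auto simp: S_def)
  have hder: "(h k has_field_derivative h' k z) (at z within S)" if "z \<in> S" for k z
  proof -
    have "(h k has_field_derivative h' k z) (at z)"
      using apos[OF that, of k] unfolding h_def h'_def
      by (auto intro!: derivative_eq_intros simp: field_simps power2_eq_square)
    thus ?thesis by (rule has_field_derivative_at_within)
  qed
  have hbound: "norm (h' k z) \<le> M k" if "z \<in> S" for k z
  proof -
    have d1: "1 \<le> (2*real k+1)^2" by (rule odd_sq_ge)
    have "a k + 4*z^2 \<le> 2*pi^2*(2*real k+1)^2"
    proof -
      have "4*z^2 \<le> pi^2"
      proof -
        have "\<bar>2*z\<bar> \<le> \<bar>pi\<bar>" using sS[OF that] R by simp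
        hence "(2*z)^2 \<le> pi^2" by (subst (asm) abs_le_square_iff) simp
        thus ?thesis by (simp add: power_mult_distrib)
      qed
      moreover have "pi^2 \<le> pi^2*(2*real k+1)^2" using d1 by (simp add: mult_le_cancel_left1)
      ultimately show ?thesis unfolding a_def by linarith
    qed
    moreover have "(dl * (2*real k+1)^2)^2 \<le> (a k - 4*z^2)^2"
      using lb[OF that, of k] dl d1 by (intro power_mono) auto
    moreover have "0 \<le> a k + 4*z^2" using apos[OF that, of k] by (simp add: a_def)
    ultimately have "h' k z \<le> 8*(2*pi^2*(2*real k+1)^2) / (dl * (2*real k+1)^2)^2"
      unfolding h'_def using dl d1 by (intro frac_le) auto
    also have "\<dots> = M k"
    proof -
      have "8*(2*pi^2*q)/(dl*q)^2 = 16*pi^2/dl^2*(1/q)" if "q \<ge> 1" for q :: real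
        using that dl by (simp add: field_simps power2_eq_square)
      from this[OF d1] show ?thesis by (simp add: M_def)
    qed
    finally have "h' k z \<le> M k" .
    moreover have "0 \<le> h' k z" using apos[OF that, of k] unfolding h'_def a_def by simp
    ultimately show ?thesis by simp
  qed
  have Msum: "summable M" unfolding M_def by (intro summable_mult summable_inv_odd_sq)
  have unif: "uniformly_convergent_on S (\<lambda>n z. \<Sum>i<n. h' i z)"
    unfolding uniformly_convergent_on_def
    using Weierstrass_m_test[of S h' M, OF hbound Msum] by blast
  have h0: "summable (\<lambda>n. h n 0)" by (simp add: h_def)
  have 0: "0 \<in> S" using R by (simp add: S_def)
  have "interior S = S" by (simp add: S_def interior_open)
  hence tI: "t \<in> interior S" using tS by simp
  from has_field_derivative_series'(2)[OF _ hder unif 0 h0 tI]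
  have d1: "((\<lambda>z. \<Sum>n. h n z) has_field_derivative (\<Sum>n. h' n t)) (at t)"
    by (simp add: S_def)
  have tanS: "(\<Sum>n. h n z) = tan z" if "z \<in> S" for z
  proof -
    have "\<bar>z\<bar> < pi/2" using sS[OF that] R by simp
    from tan_pfd[OF this] show ?thesis by (simp add: h_def a_def sums_iff)
  qed
  have d1': "(tan has_field_derivative (\<Sum>n. h' n t)) (at t)"
    by (rule has_field_derivative_transform_within_open[OF d1 _ tS]) (auto simp: S_def tanS)
  have ct: "cos t \<noteq> 0"
  proof -
    have "t < pi/2" "-t < pi/2" using t by (auto simp only: abs_less_iff)
    hence "cos t > 0" by (intro cos_gt_zero_pi) linarith+
    thus ?thesis by simp
  qed
  have d2: "(tan has_field_derivative inverse ((cos t)^2)) (at t)"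
    using ct by (rule DERIV_tan)
  have hsum: "(\<lambda>n. h' n t) sums (inverse ((cos t)^2))"
  proof -
    have "summable (\<lambda>n. h' n t)"
      by (rule summable_comparison_test'[OF Msum, of 0]) (use hbound tS in auto)
    thus ?thesis using DERIV_unique[OF d1' d2] by (simp add: summable_sums_iff)
  qed
  have tsum: "(\<lambda>n. h n t) sums tan t"
    using tan_pfd[OF t] by (simp add: h_def a_def)
  have "(\<lambda>n. t * h' n t - h n t) sums (t * inverse ((cos t)^2) - tan t)"
    by (intro sums_diff sums_mult hsum tsum)
  moreover have "t * h' n t - h n t = 64*t^3 / (pi^2*(2*real n+1)^2 - 4*t^2)^2" for n
  proof -
    have "t * (8*(b + 4*t^2) / (b - 4*t^2)^2) - 8*t / (b - 4*t^2) = 64*t^3 / (b - 4*t^2)^2"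
      if "0 < b - 4*t^2" for b :: real
    proof -
      have "t * (8*((A + 4*t^2) + 4*t^2) / A^2) - 8*t / A = 64*t^3 / A^2" if "0 < A" for A :: real
        using that by (simp add: field_simps power2_eq_square power3_eq_cube)
      from this[OF that] show ?thesis by simp
    qed
    from this[OF apos[OF tS, of n]] show ?thesis unfolding h_def h'_def a_def .
  qed
  ultimately show ?thesis by (simp add: divide_inverse)
qed



lemma sinh_product:
  fixes x :: real assumes x: "x \<noteq> 0"
  shows "(\<lambda>n. \<Prod>k<n. 1 + x^2 / (real (Suc k))^2) \<longlonglongrightarrow>
           ((exp (pi*x) - inverse (exp (pi*x))) / 2) / (pi*x)"
proof -
  define z where "z = \<i> * complex_of_real x"
  define c where "c = - \<i> / complex_of_real (pi*x)"
  have "(\<lambda>n. c * (of_real pi * z * (\<Prod>k=1..n. 1 - z^2 / of_nat k^2))) \<longlonglongrightarrow> c * sin (of_real pi * z)"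
    by (intro tendsto_mult tendsto_const sin_product_formula_complex)
  also have "(\<lambda>n. c * (of_real pi * z * (\<Prod>k=1..n. 1 - z^2 / of_nat k^2))) =
             (\<lambda>n. complex_of_real (\<Prod>k<n. 1 + x^2 / (real (Suc k))^2))"
  proof (rule ext)
    fix n
    have z2: "z^2 = - complex_of_real (x^2)" by (simp add: z_def power_mult_distrib)
    have "(\<Prod>k=1..n. 1 - z^2 / of_nat k^2) = (\<Prod>k=1..n. complex_of_real (1 + x^2 / (real k)^2))"
      by (intro prod.cong refl) (simp add: z2)
    also have "\<dots> = complex_of_real (\<Prod>k<n. 1 + x^2 / (real (Suc k))^2)"
      by (simp only: One_nat_def prod.atLeast1_atMost_eq of_real_prod)
    finally have p: "(\<Prod>k=1..n. 1 - z^2 / of_nat k^2) = complex_of_real (\<Prod>k<n. 1 + x^2 / (real (Suc k))^2)" .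
    have one: "c * (of_real pi * z) = 1" using x by (simp add: c_def z_def field_simps)
    have "c * (of_real pi * z * (\<Prod>k=1..n. 1 - z^2 / of_nat k^2)) = (c * (of_real pi * z)) * (\<Prod>k=1..n. 1 - z^2 / of_nat k^2)"
      by (simp only: mult.assoc)
    also have "\<dots> = (\<Prod>k=1..n. 1 - z^2 / of_nat k^2)" by (simp only: one mult_1_left)
    also have "\<dots> = complex_of_real (\<Prod>k<n. 1 + x^2 / (real (Suc k))^2)" by (rule p)
    finally show "c * (of_real pi * z * (\<Prod>k=1..n. 1 - z^2 / of_nat k^2)) = complex_of_real (\<Prod>k<n. 1 + x^2 / (real (Suc k))^2)" .
  qed
  also have "c * sin (of_real pi * z) = complex_of_real (((exp (pi*x) - inverse (exp (pi*x))) / 2) / (pi*x))"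
  proof -
    have "of_real pi * z = \<i> * complex_of_real (pi*x)" by (simp add: z_def)
    hence "c * sin (of_real pi * z) = complex_of_real ((exp (pi*x) - inverse (exp (pi*x))) / 2) / complex_of_real (pi*x)"
      by (simp only: sinh_real c_def) simp
    thus ?thesis by simp
  qed
  finally show ?thesis by (simp only: tendsto_of_real_iff)
qed

lemma coth_pfd_pi:
  fixes x :: real assumes x: "x > 0"
  shows "(\<lambda>k. 2*x / ((real (Suc k))^2 + x^2)) sums
           (pi * (exp (pi*x) + exp (-(pi*x))) / (exp (pi*x) - exp (-(pi*x))) - 1/x)"
proof -
  define R where "R = x + 1"
  define S where "S = {0<..<R}"
  define u where "u k y = 1 + y^2 / (real (Suc k))^2" for k y
  define u' where "u' k y = 2*y / (real (Suc k))^2" for k y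
  define M where "M k = 2*R * (1 / (real (Suc k))^2)" for k
  define F where "F y = (exp (pi*y) - exp (-(pi*y))) / (2*(pi*y))" for y
  define E where "E = exp (pi*x)"
  define e where "e = exp (-(pi*x))"
  define F' where "F' = (pi*(E + e) * (2*(pi*x)) - (E - e) * (2*pi)) / (2*(pi*x))^2"
  have Ee: "e < E" using x by (simp add: E_def e_def)
  have e0: "0 < e" by (simp add: e_def)
  have uq: "u' k y / u k y = 2*y / ((real (Suc k))^2 + y^2)" for k y
  proof -
    have "u k y = ((real (Suc k))^2 + y^2) / (real (Suc k))^2" by (simp add: u_def field_simps)
    thus ?thesis by (simp add: u'_def)
  qed
  have "(\<lambda>k. u' k x / u k x) sums (F' / F x)"
  proof (rule logderiv_prod[where S = S and M = M and F = F and u = u and u' = u' and x = x and F' = F'])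
    show "open S" "convex S" "x \<in> S" using x by (auto simp: S_def R_def)
    show "u k y > 0" if "y \<in> S" for k y
      unfolding u_def by (simp add: add_pos_nonneg)
    show "(u k has_real_derivative u' k y) (at y)" for k y
      unfolding u_def u'_def by (auto intro!: derivative_eq_intros simp: field_simps)
    show "\<bar>u' k y / u k y\<bar> \<le> M k" if "y \<in> S" for k y
    proof -
      have y: "0 < y" "y < R" using that by (auto simp: S_def)
      have "\<bar>u' k y / u k y\<bar> = 2*y / ((real (Suc k))^2 + y^2)"
        using y by (simp add: uq)
      also have "\<dots> \<le> 2*R / (real (Suc k))^2"
        using y by (intro frac_le) auto
      also have "\<dots> = M k" by (simp add: M_def)
      finally show ?thesis .
    qed
    show "summable M" unfolding M_def by (intro summable_mult summable_inv_sq)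
    show "(\<lambda>n. \<Prod>k<n. u k y) \<longlonglongrightarrow> F y" if "y \<in> S" for y
    proof -
      have "y \<noteq> 0" using that by (auto simp: S_def)
      from sinh_product[OF this] show ?thesis
        by (simp add: u_def F_def exp_minus field_simps)
    qed
    show "F y > 0" if "y \<in> S" for y
    proof -
      have y: "0 < y" using that by (auto simp: S_def)
      hence "exp (-(pi*y)) < exp (pi*y)" by simp
      thus ?thesis using y unfolding F_def by (intro divide_pos_pos) auto
    qed
    show "(F has_real_derivative F') (at x)"
      unfolding F_def F'_def E_def e_def using x
      by (auto intro!: derivative_eq_intros simp: power2_eq_square algebra_simps)
  qed
  moreover have "F' / F x = pi * (E + e) / (E - e) - 1/x"
    using x Ee e0 by (simp add: F'_def F_def E_def[symmetric] e_def[symmetric] field_simps power2_eq_square)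
  ultimately show ?thesis by (simp add: uq E_def e_def)
qed

lemma bern_pfd_pos:
  fixes t :: real assumes t: "t > 0"
  shows "(\<lambda>k. 2*t^2 / (4*pi^2*(real (Suc k))^2 + t^2)) sums (t / (exp t - 1) + t/2 - 1)"
proof -
  define x where "x = t / (2*pi)"
  have x: "x > 0" using t by (simp add: x_def)
  from sums_mult[OF coth_pfd_pi[OF x], of x]
  have S: "(\<lambda>k. x * (2*x / ((real (Suc k))^2 + x^2))) sums
          (x * (pi * (exp (pi*x) + exp (-(pi*x))) / (exp (pi*x) - exp (-(pi*x))) - 1/x))" .
  have gen: "x * (2*x / (q + x^2)) = 2*t^2 / (4*pi^2*q + t^2)" if "q > 0" for q :: real
  proof -
    have "0 < 4*pi^2*q + t^2" using that by (intro add_pos_nonneg) auto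
    thus ?thesis using that unfolding x_def by (simp add: field_simps power2_eq_square)
  qed
  have px: "pi * x = t/2" by (simp add: x_def)
  define E where "E = exp (t/2)"
  have E1: "E > 1" using t by (simp add: E_def)
  have Et: "exp t = E^2" unfolding E_def by (simp add: power2_eq_square exp_add[symmetric])
  have em: "exp (-(t/2)) = 1 / E" by (simp add: E_def exp_minus field_simps)
  have "x * (pi * (exp (pi*x) + exp (-(pi*x))) / (exp (pi*x) - exp (-(pi*x))) - 1/x)
        = (t/2) * (E + 1/E) / (E - 1/E) - 1"
  proof -
    have a: "exp (pi*x) = E" by (simp add: px E_def)
    have b: "exp (-(pi*x)) = 1/E" by (simp add: px em)
    show ?thesis unfolding a b using x by (simp add: right_diff_distrib px[symmetric] mult_ac)
  qed
  also have "\<dots> = t / (exp t - 1) + t/2 - 1"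
  proof -
    have "E^2 - 1 > 0" using E1 by (simp add: power2_eq_square) (smt (verit) mult_less_cancel_right1)
    thus ?thesis using E1 unfolding Et by (simp add: field_simps power2_eq_square)
  qed
  finally show ?thesis using S gen by simp
qed

lemma bern_pfd:
  fixes t :: real assumes t: "t \<noteq> 0"
  shows "(\<lambda>k. 2*t^2 / (4*pi^2*(real (Suc k))^2 + t^2)) sums (t / (exp t - 1) + t/2 - 1)"
proof (cases "t > 0")
  case True then show ?thesis by (rule bern_pfd_pos)
next
  case False
  hence t': "-t > 0" using t by simp
  from bern_pfd_pos[OF t'] have S: "(\<lambda>k. 2*t^2 / (4*pi^2*(real (Suc k))^2 + t^2)) sums (-t / (exp (-t) - 1) + -t/2 - 1)"
    by (simp only: power2_minus)
  have e1: "exp t \<noteq> 1" using t by simp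
  have "-t / (exp (-t) - 1) = t + t / (exp t - 1)"
    using e1 by (simp add: exp_minus field_simps)
  hence eqv: "-t / (exp (-t) - 1) + -t/2 - 1 = t / (exp t - 1) + t/2 - 1" by simp
  from S show ?thesis unfolding eqv .
qed



definition zt :: "nat \<Rightarrow> real" where "zt n = (\<Sum>k. 1 / (real (Suc k))^n)"

lemma zt_summable: assumes "n \<ge> 2" shows "summable (\<lambda>k. 1 / (real (Suc k))^n)"
proof (rule summable_comparison_test'[OF summable_inv_sq, of 0])
  fix k :: nat
  have "(real (Suc k))^2 \<le> (real (Suc k))^n" using assms by (intro power_increasing) auto
  thus "norm (1 / (real (Suc k))^n) \<le> 1 / (real (Suc k))^2"
    by (simp add: divide_left_mono)
qed

lemma zt_sums: "n \<ge> 2 \<Longrightarrow> (\<lambda>k. 1 / (real (Suc k))^n) sums zt n"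
  unfolding zt_def by (rule summable_sums[OF zt_summable])

lemma double_series:
  fixes t L :: real
  assumes t: "\<bar>t\<bar> < 2*pi"
    and L: "(\<lambda>k. 2*t^2 / (4*pi^2*(real (Suc k))^2 + t^2)) sums L"
  shows "(\<lambda>m. 2 * (-1)^m * t^(2*m+2) * zt (2*m+2) / (2*pi)^(2*m+2)) sums L"
proof -
  define q where "q k = t^2 / (4*pi^2*(real (Suc k))^2)" for k
  define f where "f = (\<lambda>(k::nat, m::nat). 2 * (-1)^m * q k ^ (m+1))"
  define q0 where "q0 = t^2 / (4*pi^2)"
  have q0: "0 \<le> q0" "q0 < 1"
  proof -
    show "0 \<le> q0" by (simp add: q0_def)
    have "\<bar>t\<bar>^2 < (2*pi)^2" using t by (intro power_strict_mono) auto
    thus "q0 < 1" by (simp add: q0_def power_mult_distrib)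
  qed
  have qk: "0 \<le> q k" "q k \<le> q0" "q k = q0 * (1 / (real (Suc k))^2)" for k
  proof -
    show "0 \<le> q k" by (simp add: q_def)
    show qe: "q k = q0 * (1 / (real (Suc k))^2)" by (simp add: q_def q0_def)
    have "1 / (real (Suc k))^2 \<le> 1" by simp
    hence "q0 * (1 / (real (Suc k))^2) \<le> q0 * 1" using q0(1) by (rule mult_left_mono)
    thus "q k \<le> q0" unfolding qe by simp
  qed
  have q1: "q k < 1" for k using qk[of k] q0 by linarith
  have nf: "norm (f (k, m)) = 2 * q k * q k ^ m" for k m
    using qk(1)[of k] by (simp add: f_def abs_mult power_abs)
  have row: "((\<lambda>m. f (k, m)) has_sum (2*t^2 / (4*pi^2*(real (Suc k))^2 + t^2))) UNIV" for k
  proof (rule norm_summable_imp_has_sum)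
    have "(\<lambda>m. 2 * q k * q k ^ m) sums (2 * q k * (1 / (1 - q k)))"
      using q1[of k] qk[of k] by (intro sums_mult geometric_sums) auto
    thus "summable (\<lambda>m. norm (f (k, m)))"
      unfolding nf by (rule sums_summable)
    have A: "(\<lambda>m. 2 * q k * (- q k) ^ m) sums (2 * q k * (1 / (1 - (- q k))))"
      using q1[of k] qk[of k] by (intro sums_mult geometric_sums) auto
    have B: "(\<lambda>m. 2 * q k * (- q k) ^ m) = (\<lambda>m. f (k, m))"
    proof (rule ext)
      fix m
      have "(- q k) ^ m = (-1)^m * q k ^ m" by (rule power_minus)
      thus "2 * q k * (- q k) ^ m = f (k, m)" by (simp add: f_def)
    qed
    have C: "2 * q k * (1 / (1 - (- q k))) = 2*t^2 / (4*pi^2*(real (Suc k))^2 + t^2)"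
    proof -
      have "0 < 4*pi^2*(real (Suc k))^2" by simp
      thus ?thesis by (simp add: q_def field_simps)
    qed
    from A show "(\<lambda>m. f (k, m)) sums (2*t^2 / (4*pi^2*(real (Suc k))^2 + t^2))"
      unfolding B C .
  qed
  have col: "((\<lambda>k. f (k, m)) has_sum (2 * (-1)^m * t^(2*m+2) * zt (2*m+2) / (2*pi)^(2*m+2))) UNIV" for m
  proof (rule norm_summable_imp_has_sum)
    have fe: "f (k, m) = (2 * (-1)^m * q0^(m+1)) * (1 / (real (Suc k))^(2*m+2))" for k
    proof -
      have e: "2*m+2 = 2*(m+1)" by simp
      have "q k ^ (m+1) = q0^(m+1) * (1/(real (Suc k))^2)^(m+1)" by (simp only: qk(3) power_mult_distrib)
      also have "(1/(real (Suc k))^2)^(m+1) = 1 / (real (Suc k))^(2*m+2)"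
        by (simp only: e power_mult power_one_over)
      finally show ?thesis by (simp add: f_def)
    qed
    have zs: "(\<lambda>k. 1 / (real (Suc k))^(2*m+2)) sums zt (2*m+2)" by (rule zt_sums) simp
    from sums_mult[OF zs, of "2 * (-1)^m * q0^(m+1)"]
    have "(\<lambda>k. f (k, m)) sums (2 * (-1)^m * q0^(m+1) * zt (2*m+2))" by (simp add: fe)
    moreover have "2 * (-1)^m * q0^(m+1) * zt (2*m+2) = 2 * (-1)^m * t^(2*m+2) * zt (2*m+2) / (2*pi)^(2*m+2)"
    proof -
      have "q0^(m+1) = t^(2*m+2) / (2*pi)^(2*m+2)"
      proof -
        have e: "2*m+2 = 2*(m+1)" by simp
        have "q0 = (t/(2*pi))^2" by (simp add: q0_def power_divide power_mult_distrib)
        hence "q0^(m+1) = (t/(2*pi))^(2*m+2)" by (simp only: e power_mult)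
        thus ?thesis by (simp only: power_divide)
      qed
      thus ?thesis by simp
    qed
    ultimately show "(\<lambda>k. f (k, m)) sums (2 * (-1)^m * t^(2*m+2) * zt (2*m+2) / (2*pi)^(2*m+2))" by simp
    show "summable (\<lambda>k. norm (f (k, m)))"
      using summable_mult[OF zt_summable[of "2*m+2"], of "\<bar>2 * (-1)^m * q0^(m+1)\<bar>"]
      by (simp add: fe abs_mult)
  qed
  have absrow: "((\<lambda>m. norm (f (k, m))) has_sum (2 * q k / (1 - q k))) UNIV" for k
  proof (rule sums_nonneg_imp_has_sum)
    have "(\<lambda>m. 2 * q k * q k ^ m) sums (2 * q k * (1 / (1 - q k)))"
      using q1[of k] qk[of k] by (intro sums_mult geometric_sums) auto
    thus "(\<lambda>m. norm (f (k, m))) sums (2 * q k / (1 - q k))"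
      unfolding nf by simp
  qed simp
  have gsum: "(\<lambda>k. 2 * q k / (1 - q k)) summable_on UNIV"
  proof (rule summable_nonneg_imp_summable_on)
    show "2 * q k / (1 - q k) \<ge> 0" for k using qk[of k] q1[of k] by simp
    show "summable (\<lambda>k. 2 * q k / (1 - q k))"
    proof (rule summable_comparison_test'[OF summable_mult[OF summable_inv_sq, of "2*q0/(1-q0)"], of 0])
      fix k :: nat
      have "2 * q k / (1 - q k) \<le> 2 * q k / (1 - q0)"
        using qk[of k] q0 q1[of k] by (intro divide_left_mono) auto
      also have "\<dots> = 2*q0/(1-q0) * (1 / (real (Suc k))^2)" by (simp add: qk(3))
      finally show "norm (2 * q k / (1 - q k)) \<le> 2*q0/(1-q0) * (1 / (real (Suc k))^2)"
        using qk[of k] q1[of k] by simp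
    qed
  qed
  have fsum: "f summable_on UNIV \<times> UNIV"
  proof -
    have "(\<lambda>x. norm (f x)) summable_on Sigma UNIV (\<lambda>_. UNIV)"
      by (rule summable_on_SigmaI[OF absrow gsum]) auto
    thus ?thesis by (rule abs_summable_summable)
  qed
  define S where "S = infsum f (UNIV \<times> UNIV)"
  have fS: "(f has_sum S) (UNIV \<times> UNIV)" using fsum by (simp add: S_def)
  have "((\<lambda>k. 2*t^2 / (4*pi^2*(real (Suc k))^2 + t^2)) has_sum S) UNIV"
    by (rule has_sum_Sigma'[OF fS row])
  hence "(\<lambda>k. 2*t^2 / (4*pi^2*(real (Suc k))^2 + t^2)) sums S" by (rule has_sum_imp_sums)
  hence SL: "S = L" using L sums_unique2 by blast
  have fS': "((\<lambda>(m, k). f (k, m)) has_sum S) (UNIV \<times> UNIV)"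
    using fS by (subst (asm) has_sum_swap) simp
  have "((\<lambda>m. 2 * (-1)^m * t^(2*m+2) * zt (2*m+2) / (2*pi)^(2*m+2)) has_sum S) UNIV"
    by (rule has_sum_Sigma'[OF fS']) (simp only: case_prod_conv, rule col)
  thus ?thesis using SL by (simp add: has_sum_imp_sums)
qed



lemma powser_a0:
  fixes a :: "nat \<Rightarrow> real"
  assumes s: "0 < s" and sm: "\<And>x. x \<noteq> 0 \<Longrightarrow> \<bar>x\<bar> < s \<Longrightarrow> (\<lambda>n. a n * x^n) sums 0"
  shows "a 0 = 0"
proof -
  have "((\<lambda>_::real. 0::real) \<longlongrightarrow> a 0) (at (0::real))"
    by (rule powser_limit_0_strong[OF s, where a = a and f = "\<lambda>_. 0"]) (use sm in auto)
  thus ?thesis by (simp add: tendsto_const_iff)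
qed

lemma powser_unique0:
  fixes a :: "nat \<Rightarrow> real"
  assumes s: "0 < s" and sm: "\<And>x. x \<noteq> 0 \<Longrightarrow> \<bar>x\<bar> < s \<Longrightarrow> (\<lambda>n. a n * x^n) sums 0"
  shows "a k = 0"
  using sm
proof (induction k arbitrary: a)
  case 0
  show ?case by (rule powser_a0[OF s 0])
next
  case (Suc k)
  have a0: "a 0 = 0" by (rule powser_a0[OF s Suc.prems])
  have "(\<lambda>n. a (Suc n) * x^n) sums 0" if x: "x \<noteq> 0" "\<bar>x\<bar> < s" for x
  proof -
    have "(\<lambda>n. a (Suc n) * x^(Suc n)) sums 0"
      using Suc.prems[OF x] a0 by (subst sums_Suc_iff) simp
    hence "(\<lambda>n. a (Suc n) * x^(Suc n) / x) sums (0 / x)" by (rule sums_divide)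
    thus ?thesis using x by (simp add: mult_ac)
  qed
  from Suc.IH[of "\<lambda>n. a (Suc n)", OF this] show ?case by simp
qed

definition Bz :: "nat \<Rightarrow> real" where
  "Bz n = (if n = 0 then 1 else if n = 1 then -1/2 else if odd n then 0
           else (-1)^(n div 2 + 1) * 2 * fact n * zt n / (2*pi)^n)"

lemma Bz_sums:
  fixes t :: real assumes t: "t \<noteq> 0" "\<bar>t\<bar> < 2*pi"
  shows "(\<lambda>n. Bz n * t^n / fact n) sums (t / (exp t - 1))"
proof -
  define F where "F n = Bz n * t^n / fact n" for n
  define G where "G n = (if n \<ge> 2 then F n else 0)" for n
  define L where "L = t / (exp t - 1) + t/2 - 1"
  have L: "(\<lambda>m. 2 * (-1)^m * t^(2*m+2) * zt (2*m+2) / (2*pi)^(2*m+2)) sums L"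
    unfolding L_def by (rule double_series[OF t(2) bern_pfd[OF t(1)]])
  have eq: "G (2*m+2) = 2 * (-1)^m * t^(2*m+2) * zt (2*m+2) / (2*pi)^(2*m+2)" for m
  proof -
    have "(2*m+2) div 2 + 1 = m + 2" by simp
    hence "Bz (2*m+2) = (-1)^(m+2) * 2 * fact (2*m+2) * zt (2*m+2) / (2*pi)^(2*m+2)"
      by (simp add: Bz_def)
    thus ?thesis by (simp add: G_def F_def)
  qed
  have "(\<lambda>m. G (2*m+2)) sums L" unfolding eq by (rule L)
  hence Gs: "G sums L"
  proof (subst (asm) sums_mono_reindex)
    show "strict_mono (\<lambda>m::nat. 2*m+2)" by (auto simp: strict_mono_def)
    show "G n = 0" if "n \<notin> range (\<lambda>m::nat. 2*m+2)" for n
    proof (cases "n \<ge> 2")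
      case True
      have "odd n"
      proof (rule ccontr)
        assume "\<not> odd n"
        hence "n = 2*(n div 2 - 1) + 2" using True by presburger
        thus False using that by (metis rangeI)
      qed
      thus ?thesis using True by (simp add: G_def F_def Bz_def)
    next
      case False
      thus ?thesis by (simp add: G_def)
    qed
  qed
  have H: "(\<lambda>n. (if n = 0 then 1 else 0) + (if n = 1 then - t/2 else 0)) sums (1 + - t/2)"
    by (intro sums_add) (simp_all add: sums_single[of 0 "\<lambda>_. 1::real", simplified] sums_single[of 1 "\<lambda>_. - t/2", simplified])
  have "(\<lambda>n. G n + ((if n = 0 then 1 else 0) + (if n = 1 then - t/2 else 0))) sums (L + (1 + - t/2))"
    by (rule sums_add[OF Gs H])
  moreover have "G n + ((if n = 0 then 1 else 0) + (if n = 1 then - t/2 else 0)) = F n" for n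
    by (cases "n = 0"; cases "n = 1") (auto simp: G_def F_def Bz_def)
  moreover have "L + (1 + - t/2) = t / (exp t - 1)" by (simp add: L_def)
  ultimately show ?thesis by (simp add: F_def)
qed

lemma bernoulli_num_eq: "bernoulli_num = Bz"
proof -
  define P where "P B = (\<forall>t::real. t \<noteq> 0 \<and> \<bar>t\<bar> < 2 * pi \<longrightarrow>
      (\<lambda>n. B n * t ^ n / fact n) sums (t / (exp t - 1)))" for B :: "nat \<Rightarrow> real"
  have PBz: "P Bz" unfolding P_def using Bz_sums by blast
  have uniq: "B = Bz" if "P B" for B
  proof
    fix n
    have "(B n - Bz n) / fact n = 0"
    proof (rule powser_unique0[of "2*pi"])
      show "0 < 2*pi" by simp
      fix x :: real assume x: "x \<noteq> 0" "\<bar>x\<bar> < 2*pi"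
      have "(\<lambda>n. B n * x ^ n / fact n - Bz n * x ^ n / fact n) sums (x / (exp x - 1) - x / (exp x - 1))"
        using that PBz x unfolding P_def by (intro sums_diff) auto
      thus "(\<lambda>n. (B n - Bz n) / fact n * x ^ n) sums 0" by (simp add: field_simps)
    qed
    thus "B n = Bz n" by simp
  qed
  have "bernoulli_num = (THE B. P B)" unfolding bernoulli_num_def P_def ..
  also have "(THE B. P B) = Bz" using PBz uniq by (rule the_equality)
  finally show ?thesis .
qed



lemma lam_sums:
  assumes n: "n \<ge> 2"
  shows "(\<lambda>k. 1 / (2*real k+1)^n) sums ((1 - 1/2^n) * zt n)"
proof -
  define f where "f j = 1 / (real (Suc j))^n" for j
  have fs: "f sums zt n" unfolding f_def by (rule zt_sums[OF n])
  define h where "h j = (if odd j then f j else 0)" for j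
  define g where "g j = (if even j then f j else 0)" for j
  have "(\<lambda>k. h (2*k+1)) sums (zt n / 2^n)"
  proof -
    have "h (2*k+1) = f k / 2^n" for k
    proof -
      have e: "real (Suc (2*k+1)) = 2 * real (Suc k)" by simp
      have "(real (Suc (2*k+1)))^n = 2^n * (real (Suc k))^n" by (simp only: e power_mult_distrib)
      thus ?thesis by (simp add: h_def f_def)
    qed
    thus ?thesis using sums_divide[OF fs, of "2^n"] by simp
  qed
  hence hs: "h sums (zt n / 2^n)"
  proof (subst (asm) sums_mono_reindex)
    show "strict_mono (\<lambda>k::nat. 2*k+1)" by (auto simp: strict_mono_def)
    show "h j = 0" if "j \<notin> range (\<lambda>k::nat. 2*k+1)" for j
    proof (cases "odd j")
      case True
      then obtain k where "j = 2*k+1" by (metis oddE)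
      with that show ?thesis by auto
    qed (simp add: h_def)
  qed
  have "g = (\<lambda>j. f j - h j)" by (auto simp: g_def h_def)
  hence gs: "g sums (zt n - zt n / 2^n)" using sums_diff[OF fs hs] by simp
  have "(\<lambda>k. g (2*k)) sums (zt n - zt n / 2^n)"
  proof (subst sums_mono_reindex)
    show "strict_mono (\<lambda>k::nat. 2*k)" by (auto simp: strict_mono_def)
    show "g j = 0" if "j \<notin> range (\<lambda>k::nat. 2*k)" for j
    proof (cases "even j")
      case True
      then obtain k where "j = 2*k" by (metis evenE)
      with that show ?thesis by auto
    qed (simp add: g_def)
  qed (rule gs)
  moreover have "g (2*k) = 1 / (2*real k+1)^n" for k by (simp add: g_def f_def add.commute)
  moreover have "zt n - zt n / 2^n = (1 - 1/2^n) * zt n" by (simp add: algebra_simps)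
  ultimately show ?thesis by simp
qed

lemma step_alg:
  fixes P A x X N D :: real
  assumes "P > 0" "A > 0" "D > 0" "A = D + x"
  shows "N*X/(P*D) + x*X/(P*D^2) =
         N*X/(P*A) + (N+1)*x*X/(A*P*D) + x^2*X/(A*P*D^2)"
proof -
  have nz: "P \<noteq> 0" "A \<noteq> 0" "D \<noteq> 0" using assms by auto
  show ?thesis
    using nz apply (simp add: field_simps power2_eq_square)
    by (simp add: assms(4) algebra_simps)
qed

lemma term_id:
  fixes A x :: real
  assumes A: "A > 0" "A - x > 0"
  shows "x/(A-x)^2 = (\<Sum>m=1..n. real m * x^m / A^(m+1))
           + real (Suc n) * x^(Suc n) / (A^(Suc n) * (A-x)) + x^(Suc (Suc n)) / (A^(Suc n) * (A-x)^2)"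
proof (induction n)
  case 0
  define D where "D = A - x"
  have D: "D > 0" "A = D + x" "A \<noteq> 0" "D \<noteq> 0" using A by (auto simp: D_def)
  have "x/D^2 = 1 * x / (A * D) + x^2 / (A * D^2)"
    using D(3,4) apply (simp add: field_simps power2_eq_square)
    by (simp add: D(2) algebra_simps)
  thus ?case by (simp add: D_def power2_eq_square)
next
  case (Suc n)
  define X where "X = x^(Suc n)"
  define P where "P = A^(Suc n)"
  have P: "P > 0" using A by (simp add: P_def)
  have "real (Suc n) * x^(Suc n) / (A^(Suc n) * (A-x)) + x^(Suc (Suc n)) / (A^(Suc n) * (A-x)^2)
      = real (Suc n) * X / (P * (A-x)) + x * X / (P * (A-x)^2)" by (simp add: X_def P_def)
  also have "\<dots> = real (Suc n) * X / (P * A) + (real (Suc n) + 1) * x * X / (A * P * (A-x))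
                   + x^2 * X / (A * P * (A-x)^2)"
    by (rule step_alg[OF P A(1) A(2)]) simp
  also have "\<dots> = real (Suc n) * x^(Suc n) / A^(Suc n + 1)
       + real (Suc (Suc n)) * x^(Suc (Suc n)) / (A^(Suc (Suc n)) * (A-x))
       + x^(Suc (Suc (Suc n))) / (A^(Suc (Suc n)) * (A-x)^2)"
    by (simp add: X_def P_def power2_eq_square mult_ac)
  finally have "real (Suc n) * x^(Suc n) / (A^(Suc n) * (A-x)) + x^(Suc (Suc n)) / (A^(Suc n) * (A-x)^2)
     = real (Suc n) * x^(Suc n) / A^(Suc n + 1)
       + real (Suc (Suc n)) * x^(Suc (Suc n)) / (A^(Suc (Suc n)) * (A-x))
       + x^(Suc (Suc (Suc n))) / (A^(Suc (Suc n)) * (A-x)^2)" .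
  with Suc.IH show ?case by simp
qed



lemma zt_nonneg: "n \<ge> 2 \<Longrightarrow> zt n \<ge> 0"
  unfolding zt_def by (intro suminf_nonneg zt_summable) auto

lemma abs_Bz: "\<bar>Bz (2*m+2)\<bar> = 2 * fact (2*m+2) * zt (2*m+2) / (2*pi)^(2*m+2)"
proof -
  have "(2*m+2) div 2 + 1 = m + 2" by simp
  hence "Bz (2*m+2) = (-1)^(m+2) * (2 * fact (2*m+2) * zt (2*m+2) / (2*pi)^(2*m+2))"
    by (simp add: Bz_def)
  moreover have "zt (2*m+2) \<ge> 0" by (rule zt_nonneg) simp
  ultimately show ?thesis by (simp add: abs_mult)
qed

lemma coef_eq:
  fixes t :: real
  shows "16 * t * real m * (4*t^2)^m / pi^(2*m+2) * ((1 - 1/2^(2*m+2)) * zt (2*m+2)) =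
    2 * real m * 2 ^ (2 * m + 2) * (2 ^ (2 * m + 2) - 1) * \<bar>Bz (2 * m + 2)\<bar> / fact (2 * m + 2) * t ^ (2 * m + 1)"
proof -
  define p :: real where "p = 2^(2*m)"
  define T where "T = t^(2*m)"
  define Q where "Q = pi^(2*m+2)"
  define Z where "Z = zt (2*m+2)"
  define F :: real where "F = fact (2*m+2)"
  have p: "p > 0" by (simp add: p_def)
  have Q: "Q > 0" by (simp add: Q_def)
  have F: "F > 0" by (simp add: F_def)
  have e1: "(4*t^2)^m = p * T" by (simp add: p_def T_def power_mult_distrib power_mult)
  have e2: "(2::real)^(2*m+2) = 4 * p" by (simp add: p_def power_add)
  have e3: "(2*pi)^(2*m+2) = 4 * p * Q" by (simp add: p_def Q_def power_mult_distrib power_add)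
  have e4: "t^(2*m+1) = t * T" by (simp add: T_def)
  show ?thesis
    unfolding abs_Bz e1 e2 e3 e4 Z_def[symmetric] F_def[symmetric] Q_def[symmetric]
    using p Q F by (simp add: field_simps)
qed

lemma rem_eq1:
  fixes t w D :: real and N :: nat
  assumes "w \<noteq> 0" "D \<noteq> 0"
  shows "16*t*(real N * (4*t^2)^N / ((pi^2*w^2)^N * D)) =
         real N * 2 ^ (2 * N + 4) * t ^ (2 * N + 1) / pi ^ (2 * N) * (1 / (w^(2*N) * D))"
proof -
  have e1: "(4*t^2)^N = 2^(2*N) * t^(2*N)" by (simp add: power_mult_distrib power_mult)
  have e2: "(pi^2*w^2)^N = pi^(2*N) * w^(2*N)" by (simp add: power_mult_distrib power_mult)
  have e3: "(2::real)^(2*N+4) = 16 * 2^(2*N)" by (simp add: power_add)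
  have e4: "t^(2*N+1) = t * t^(2*N)" by simp
  show ?thesis unfolding e1 e2 e3 e4 using assms by (simp add: field_simps)
qed

lemma rem_eq2:
  fixes t w D :: real and N :: nat
  assumes "w \<noteq> 0" "D \<noteq> 0"
  shows "16*t*((4*t^2)^(Suc N) / ((pi^2*w^2)^N * D^2)) =
         2 ^ (2 * N + 6) * t ^ (2 * N + 3) / pi ^ (2 * N) * (1 / (w^(2*N) * D^2))"
proof -
  have e1: "(4*t^2)^(Suc N) = 4 * t^2 * (2^(2*N) * t^(2*N))" by (simp add: power_mult_distrib power_mult)
  have e2: "(pi^2*w^2)^N = pi^(2*N) * w^(2*N)" by (simp add: power_mult_distrib power_mult)
  have e3: "(2::real)^(2*N+6) = 64 * 2^(2*N)" by (simp add: power_add)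
  have e4: "t^(2*N+3) = t^3 * t^(2*N)" by (simp add: power_add)
  show ?thesis unfolding e1 e2 e3 e4 using assms by (simp add: field_simps power2_eq_square power3_eq_cube)
qed



theorem mainTheorem12:
  fixes N :: nat and t :: real
  assumes "N \<ge> 1" and "\<bar>t\<bar> < pi / 2"
  shows "t / (cos t)\<^sup>2 - tan t =
    (\<Sum>j = 1..N - 1. 2 * real j * 2 ^ (2 * j + 2) * (2 ^ (2 * j + 2) - 1)
        * \<bar>bernoulli_num (2 * j + 2)\<bar> / fact (2 * j + 2) * t ^ (2 * j + 1))
    + kappa N t"
proof -
  have t: "\<bar>t\<bar> < pi/2" by (rule assms(2))
  obtain n where N: "N = Suc n" using assms(1) by (cases N) auto
  define x where "x = 4*t^2"
  define w where "w k = 2*real k+1" for k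
  define a where "a k = pi^2*(w k)^2" for k
  define D where "D k = a k - x" for k
  define dl where "dl = pi^2 - 4*\<bar>t\<bar>^2"
  have w1: "w k \<ge> 1" for k by (simp add: w_def)
  have w2: "(w k)^2 \<ge> 1" for k using odd_sq_ge[of k] by (simp add: w_def)
  have dl: "dl > 0" using odd_den_pos(2)[of t "\<bar>t\<bar>"] t by (simp add: dl_def)
  have Dlb: "dl * (w k)^2 \<le> D k" for k
    using odd_den_pos(1)[of t "\<bar>t\<bar>" k] t by (simp add: dl_def D_def a_def x_def w_def)
  have dw: "0 < dl * (w k)^2" for k
  proof -
    have "0 < (w k)^2" using w2[of k] by linarith
    thus "0 < dl * (w k)^2" using dl by (rule mult_pos_pos[rotated])
  qed
  have Dpos: "D k > 0" for k
  proof -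
    have "0 < (w k)^2" using w2[of k] by linarith
    hence "0 < dl * (w k)^2" using dl by (rule mult_pos_pos[rotated])
    thus ?thesis using Dlb[of k] by linarith
  qed
  have apos: "a k > 0" for k using w1[of k] by (simp add: a_def)
  define fin where "fin k = (\<Sum>m=1..n. 16*t*(real m * x^m / (a k)^(m+1)))" for k
  define r1 where "r1 k = 16*t*(real N * x^N / ((a k)^N * D k))" for k
  define r2 where "r2 k = 16*t*(x^(Suc N) / ((a k)^N * (D k)^2))" for k
  define LHS where "LHS = t / (cos t)\<^sup>2 - tan t"
  have T: "(\<lambda>k. fin k + r1 k + r2 k) sums LHS"
  proof -
    have "64*t^3 / (pi^2*(2*real k+1)^2 - 4*t^2)^2 = fin k + r1 k + r2 k" for k
    proof -
      have A: "a k > 0" "a k - x > 0" using apos[of k] Dpos[of k] by (auto simp: D_def)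
      have "64*t^3 / (pi^2*(2*real k+1)^2 - 4*t^2)^2 = 16*t * (x / (a k - x)^2)"
        by (simp add: x_def a_def w_def power3_eq_cube power2_eq_square)
      also have "\<dots> = 16*t * ((\<Sum>m=1..n. real m * x^m / (a k)^(m+1))
           + real (Suc n) * x^(Suc n) / ((a k)^(Suc n) * (a k - x)) + x^(Suc (Suc n)) / ((a k)^(Suc n) * (a k - x)^2))"
        by (subst term_id[OF A]) (rule refl)
      also have "\<dots> = fin k + r1 k + r2 k"
        by (simp add: fin_def r1_def r2_def D_def N sum_distrib_left distrib_left)
      finally show ?thesis .
    qed
    with tan_deriv_pfd[OF t] show ?thesis by (simp add: LHS_def)
  qed
  define cf where "cf m = 16 * t * real m * (4*t^2)^m / pi^(2*m+2) * ((1 - 1/2^(2*m+2)) * zt (2*m+2))" for m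
  have finS: "(\<lambda>k. fin k) sums (\<Sum>m=1..n. cf m)"
    unfolding fin_def
  proof (rule sums_sum)
    fix m assume "m \<in> {1..n}"
    have "(\<lambda>k. 16 * t * real m * (4*t^2)^m / pi^(2*m+2) * (1 / (2*real k+1)^(2*m+2))) sums cf m"
      unfolding cf_def by (intro sums_mult lam_sums) simp
    moreover have "16 * t * real m * (4*t^2)^m / pi^(2*m+2) * (1 / (2*real k+1)^(2*m+2)) =
                   16*t*(real m * x^m / (a k)^(m+1))" for k
    proof -
      have e: "2*m+2 = 2*(m+1)" by simp
      have "(a k)^(m+1) = pi^(2*m+2) * (2*real k+1)^(2*m+2)"
        by (simp only: a_def w_def e power_mult power_mult_distrib)
      thus ?thesis by (simp add: x_def)
    qed
    ultimately show "(\<lambda>k. 16*t*(real m * x^m / (a k)^(m+1))) sums cf m" by simp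
  qed
  define C1 where "C1 = real N * 2 ^ (2 * N + 4) * t ^ (2 * N + 1) / pi ^ (2 * N)"
  define C2 where "C2 = 2 ^ (2 * N + 6) * t ^ (2 * N + 3) / pi ^ (2 * N)"
  define u where "u k = 1 / ((w k)^(2*N) * D k)" for k
  define v where "v k = 1 / ((w k)^(2*N) * (D k)^2)" for k
  have r1e: "r1 k = C1 * u k" for k
    unfolding r1_def C1_def u_def a_def x_def
    by (rule rem_eq1) (use w1[of k] Dpos[of k] in auto)
  have r2e: "r2 k = C2 * v k" for k
    unfolding r2_def C2_def v_def a_def x_def
    by (rule rem_eq2) (use w1[of k] Dpos[of k] in auto)
  have wN: "(w k)^(2*N) \<ge> 1" for k using w1[of k] by (simp add: one_le_power)
  have us: "summable u"
  proof (rule summable_comparison_test'[OF summable_mult[OF summable_inv_odd_sq, of "1/dl"], of 0])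
    fix k :: nat
    have "u k \<le> 1 / D k"
      unfolding u_def using wN[of k] Dpos[of k] by (intro divide_left_mono) (auto intro: mult_right_mono[of 1, simplified])
    also have "\<dots> \<le> 1 / (dl * (w k)^2)"
      using Dlb[of k] dw[of k] Dpos[of k] by (intro divide_left_mono) auto
    also have "\<dots> = 1/dl * (1 / (2*real k+1)^2)" by (simp add: w_def)
    finally show "norm (u k) \<le> 1/dl * (1 / (2*real k+1)^2)"
      using Dpos[of k] wN[of k] by (simp add: u_def)
  qed
  have vs: "summable v"
  proof (rule summable_comparison_test'[OF summable_mult[OF summable_inv_odd_sq, of "1/dl^2"], of 0])
    fix k :: nat
    have "v k \<le> 1 / (D k)^2"
      unfolding v_def using wN[of k] Dpos[of k] by (intro divide_left_mono) (auto intro: mult_right_mono[of 1, simplified])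
    also have "\<dots> \<le> 1 / (dl * (w k)^2)^2"
      using Dlb[of k] dw[of k] Dpos[of k] by (intro divide_left_mono power_mono) (auto intro!: mult_pos_pos)
    also have "\<dots> \<le> 1 / (dl^2 * (w k)^2)"
    proof -
      have "(w k)^2 * 1 \<le> (w k)^2 * (w k)^2" by (rule mult_left_mono[OF w2]) simp
      hence "dl^2 * ((w k)^2 * 1) \<le> dl^2 * ((w k)^2 * (w k)^2)" by (rule mult_left_mono) simp
      moreover have "(dl * (w k)^2)^2 = dl^2 * ((w k)^2 * (w k)^2)" by (simp add: power_mult_distrib power2_eq_square)
      ultimately have le: "dl^2 * (w k)^2 \<le> (dl * (w k)^2)^2" by simp
      have p1: "0 < dl^2 * (w k)^2" using dl w2[of k] by (intro mult_pos_pos) auto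
      have p2: "0 < (dl * (w k)^2)^2" using dw[of k] by (rule zero_less_power)
      show ?thesis by (rule divide_left_mono[OF le]) (use mult_pos_pos[OF p2 p1] in auto)
    qed
    also have "\<dots> = 1/dl^2 * (1 / (2*real k+1)^2)" by (simp add: w_def)
    finally show "norm (v k) \<le> 1/dl^2 * (1 / (2*real k+1)^2)"
      using Dpos[of k] wN[of k] by (simp add: v_def)
  qed
  have R: "(\<lambda>k. r1 k + r2 k) sums (C1 * suminf u + C2 * suminf v)"
    unfolding r1e r2e by (intro sums_add sums_mult summable_sums us vs)
  have "(\<lambda>k. (fin k + r1 k + r2 k) - fin k) sums (LHS - (\<Sum>m=1..n. cf m))"
    by (rule sums_diff[OF T finS])
  hence R2: "(\<lambda>k. r1 k + r2 k) sums (LHS - (\<Sum>m=1..n. cf m))" by simp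
  have kap: "kappa N t = C1 * suminf u + C2 * suminf v"
  proof -
    have e: "2 * real (Suc k) - 1 = w k" for k by (simp add: w_def)
    have "(\<lambda>k. 1 / ((2 * real (Suc k) - 1) ^ (2 * N) * (pi\<^sup>2 * (2 * real (Suc k) - 1)\<^sup>2 - 4 * t\<^sup>2))) = u"
      by (rule ext) (simp only: e u_def D_def a_def x_def)
    moreover have "(\<lambda>k. 1 / ((2 * real (Suc k) - 1) ^ (2 * N) * (pi\<^sup>2 * (2 * real (Suc k) - 1)\<^sup>2 - 4 * t\<^sup>2)\<^sup>2)) = v"
      by (rule ext) (simp only: e v_def D_def a_def x_def)
    ultimately show ?thesis unfolding kappa_def C1_def C2_def by simp
  qed
  have "LHS - (\<Sum>m=1..n. cf m) = kappa N t"
    using sums_unique2[OF R2 R] kap by simp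
  moreover have "(\<Sum>m=1..n. cf m) = (\<Sum>j = 1..N - 1. 2 * real j * 2 ^ (2 * j + 2) * (2 ^ (2 * j + 2) - 1)
        * \<bar>bernoulli_num (2 * j + 2)\<bar> / fact (2 * j + 2) * t ^ (2 * j + 1))"
    unfolding bernoulli_num_eq N cf_def by (simp only: diff_Suc_1 coef_eq)
  ultimately show ?thesis unfolding LHS_def by simp
qed


end
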